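(* Let $G$ be a graph, $(\mathcal T,\{B_i\})$ a tree decomposition of $G$, $\{\mu_L\}$ a consistent family of distributions for it, and $f$ the output of SC-Round on these inputs. Let $e\notin V(G)$ be a new dummy vertex and let $(\mathcal T,\{B'_i\})$ with $B'_i=B_i\cup\{e\}$. Then there exists a consistent family $\{\mu'_{L'}\}$ for $(\mathcal T,\{B'_i\})$, indexed by $L'=L\cup\{e\}$, which is symmetric, i.e. $\Pr_{g\sim\mu'_{L'}}[g=g']=\Pr_{g\sim\mu'_{L'}}[g=\overline{g'}]$ for all $L'$-assignments $g'$, such that the output $f^*$ of SC-Round on $(\mathcal T,\{B'_i\})$ with $\{\mu'_{L'}\}$ satisfies, for every $V(G)$-assignment $f'$, $$\Pr[f=f']+\Pr[f=\overline{f'}] = \Pr[f^*|_{V(G)}=f']+\Pr[f^*|_{V(G)}=\overline{f'}].$$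
   Context: For a finite set $X$, an $X$-assignment is a map $X\to\{0,1\}$; its mirror is $\overline{g}=1-g$. Consistent family for a tree decomposition $(\mathcal T,\{B_i\})$ of $G$: for every set $L=B_i\cup\{s,t\}$ ($i\in V(\mathcal T)$, $s,t$ vertices) a distribution $\mu_L$ on $L$-assignments such that marginals of $\mu_L,\mu_{L'}$ agree on $L\cap L'$. SC-Round: choose a start node $i_0$, sample $f|_{B_{i_0}}\sim\mu_{B_{i_0}}$; process remaining nodes in non-decreasing distance from $i_0$; for node $i$ with already processed neighbour $j$, let $B^+=B_i\cap B_j$, $B^-=B_i\setminus B^+$, and sample $f|_{B^-}$ from $\mu_{B_i}$ conditioned on agreement with $f$ on $B^+$. Output $f$. *)

theory Defs
  imports "HOL-Probability.Probability_Mass_Function"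
begin

text \<open>Assignments: an X-assignment is a partial map with domain exactly X
  (values in bool, False = 0, True = 1).  The mirror flips every value.\<close>

type_synonym 'v assignment = "'v \<Rightarrow> bool option"

definition mirror :: "'v assignment \<Rightarrow> 'v assignment" where
  "mirror g = (\<lambda>x. map_option Not (g x))"

definition is_tree :: "'n set \<Rightarrow> ('n \<times> 'n) set \<Rightarrow> bool" where
  "is_tree I TE \<longleftrightarrow> finite I \<and> I \<noteq> {} \<and> TE \<subseteq> I \<times> I \<and> sym TE \<and> irrefl TE
     \<and> (\<forall>i\<in>I. \<forall>j\<in>I. (i, j) \<in> TE\<^sup>*) \<and> card TE = 2 * (card I - 1)"

definition tree_decomposition ::
  "'v set \<Rightarrow> ('v \<times> 'v) set \<Rightarrow> 'n set \<Rightarrow> ('n \<times> 'n) set \<Rightarrow> ('n \<Rightarrow> 'v set) \<Rightarrow> bool" where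
  "tree_decomposition V E I TE B \<longleftrightarrow>
     finite V \<and> E \<subseteq> V \<times> V \<and> is_tree I TE
     \<and> (\<forall>i\<in>I. B i \<subseteq> V) \<and> (\<Union>i\<in>I. B i) = V
     \<and> (\<forall>(u, w)\<in>E. \<exists>i\<in>I. u \<in> B i \<and> w \<in> B i)
     \<and> (\<forall>v\<in>V. \<forall>i\<in>I. \<forall>j\<in>I. v \<in> B i \<longrightarrow> v \<in> B j \<longrightarrow>
           (i, j) \<in> (TE \<inter> {k\<in>I. v \<in> B k} \<times> {k\<in>I. v \<in> B k})\<^sup>*)"

definition fam_sets :: "'v set \<Rightarrow> 'n set \<Rightarrow> ('n \<Rightarrow> 'v set) \<Rightarrow> 'v set set" where
  "fam_sets V I B = {B i \<union> {s, t} | i s t. i \<in> I \<and> s \<in> V \<and> t \<in> V}"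

definition consistent_family ::
  "'v set \<Rightarrow> 'n set \<Rightarrow> ('n \<Rightarrow> 'v set) \<Rightarrow> ('v set \<Rightarrow> 'v assignment pmf) \<Rightarrow> bool" where
  "consistent_family V I B \<mu> \<longleftrightarrow>
     (\<forall>L\<in>fam_sets V I B. \<forall>g\<in>set_pmf (\<mu> L). dom g = L)
     \<and> (\<forall>L\<in>fam_sets V I B. \<forall>L'\<in>fam_sets V I B.
          map_pmf (\<lambda>g. g |` (L \<inter> L')) (\<mu> L) = map_pmf (\<lambda>g. g |` (L \<inter> L')) (\<mu> L'))"

definition symmetric_family ::
  "'v set \<Rightarrow> 'n set \<Rightarrow> ('n \<Rightarrow> 'v set) \<Rightarrow> ('v set \<Rightarrow> 'v assignment pmf) \<Rightarrow> bool" where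
  "symmetric_family V I B \<mu> \<longleftrightarrow>
     (\<forall>L\<in>fam_sets V I B. \<forall>g'. dom g' = L \<longrightarrow> pmf (\<mu> L) g' = pmf (\<mu> L) (mirror g'))"

definition tdist :: "('n \<times> 'n) set \<Rightarrow> 'n \<Rightarrow> 'n \<Rightarrow> nat" where
  "tdist TE i j = (LEAST k. (i, j) \<in> TE ^^ k)"

definition sc_order :: "'n set \<Rightarrow> ('n \<times> 'n) set \<Rightarrow> 'n \<Rightarrow> 'n list \<Rightarrow> bool" where
  "sc_order I TE i0 ns \<longleftrightarrow> i0 \<in> I \<and> ns \<noteq> [] \<and> hd ns = i0 \<and> distinct ns \<and> set ns = I
     \<and> sorted (map (tdist TE i0) ns)"

text \<open>One pass over the remaining nodes: node i with an already processed
  neighbour j; B+ = B i \<inter> B j, B- = B i - B+; sample f on B- from \<mu>(B i)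
  conditioned on agreement with f on B+.\<close>

primrec sc_steps ::
  "'n list \<Rightarrow> ('v set \<Rightarrow> 'v assignment pmf) \<Rightarrow> ('n \<Rightarrow> 'v set) \<Rightarrow> ('n \<times> 'n) set
     \<Rightarrow> 'n list \<Rightarrow> 'v assignment \<Rightarrow> 'v assignment pmf" where
  "sc_steps [] \<mu> B TE done f = return_pmf f"
| "sc_steps (i # is) \<mu> B TE done f =
     (let j = (SOME j. j \<in> set done \<and> (j, i) \<in> TE);
          Bp = B i \<inter> B j;
          Bm = B i - Bp
      in bind_pmf (cond_pmf (\<mu> (B i)) {g. g |` Bp = f |` Bp})
           (\<lambda>g. sc_steps is \<mu> B TE (done @ [i]) (f ++ (g |` Bm))))"

definition sc_round ::
  "('v set \<Rightarrow> 'v assignment pmf) \<Rightarrow> ('n \<Rightarrow> 'v set) \<Rightarrow> ('n \<times> 'n) set \<Rightarrow> 'n list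
     \<Rightarrow> 'v assignment pmf" where
  "sc_round \<mu> B TE ns =
     bind_pmf (\<mu> (B (hd ns))) (\<lambda>g. sc_steps (tl ns) \<mu> B TE [hd ns] (g |` B (hd ns)))"

end

theory Submission
  imports Defs
begin


definition Tm :: "'v \<Rightarrow> bool \<Rightarrow> 'v assignment \<Rightarrow> 'v assignment" where
  "Tm e c h = (if c then h(e \<mapsto> False) else mirror (h(e \<mapsto> False)))"

lemma mirror_mirror[simp]: "mirror (mirror g) = g"
  unfolding mirror_def by (rule ext) (simp add: option.map_comp o_def option.map_ident)

lemma inj_mirror: "inj mirror"
  by (metis injI mirror_mirror)

lemma dom_mirror[simp]: "dom (mirror g) = dom g"
  unfolding mirror_def by auto

lemma mirror_restrict: "mirror (g |` X) = mirror g |` X"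
  unfolding mirror_def by (rule ext) (simp add: restrict_map_def)

lemma mirror_add: "mirror (f ++ g) = mirror f ++ mirror g"
  unfolding mirror_def by (rule ext) (simp add: map_add_def split: option.split)

lemma mirror_upd: "mirror (h(x \<mapsto> b)) = (mirror h)(x \<mapsto> \<not> b)"
  unfolding mirror_def by (rule ext) simp

lemma dom_Tm[simp]: "dom (Tm e c h) = insert e (dom h)"
  unfolding Tm_def by auto

lemma mirror_Tm: "mirror (Tm e c h) = Tm e (\<not> c) h"
  unfolding Tm_def by auto

lemma Tm_restrict_in: "e \<in> X \<Longrightarrow> Tm e c h |` X = Tm e c (h |` (X - {e}))"
  unfolding Tm_def mirror_def by (rule ext) (auto simp: restrict_map_def)

lemma Tm_restrict_out: "e \<notin> X \<Longrightarrow> Tm e c h |` X = (if c then h |` X else mirror (h |` X))"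
  unfolding Tm_def mirror_def by (rule ext) (auto simp: restrict_map_def)

lemma Tm_add: "e \<notin> dom h \<Longrightarrow> Tm e c f ++ (if c then h else mirror h) = Tm e c (f ++ h)"
  unfolding Tm_def mirror_def by (rule ext) (auto simp: map_add_def split: option.split)

lemma Tm_e: "Tm e c h e = Some (\<not> c)"
  unfolding Tm_def mirror_def by auto

lemma Tm_eq_iff:
  assumes "e \<notin> dom h1" "e \<notin> dom h2"
  shows "Tm e c1 h1 = Tm e c2 h2 \<longleftrightarrow> c1 = c2 \<and> h1 = h2"
proof
  assume H: "Tm e c1 h1 = Tm e c2 h2"
  then have c: "c1 = c2" using Tm_e[of e c1 h1] Tm_e[of e c2 h2] by simp
  have "h1 x = h2 x" for x
  proof (cases "x = e")
    case True then show ?thesis using assms by (simp add: domIff)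
  next
    case False
    have "Tm e c1 h1 x = Tm e c2 h2 x" using H by simp
    then show ?thesis using False c unfolding Tm_def mirror_def
      by (cases c2) (auto simp: option.map_comp o_def option.map_ident dest: arg_cong[where f="map_option Not"])
  qed
  then show "c1 = c2 \<and> h1 = h2" using c by auto
qed auto



definition tpar :: "('n \<times> 'n) set \<Rightarrow> 'n \<Rightarrow> 'n \<Rightarrow> 'n" where
  "tpar TE i0 x = (SOME w. (w, x) \<in> TE \<and> tdist TE i0 w + 1 = tdist TE i0 x)"

context
  fixes I :: "'n set" and TE i0
  assumes tree: "is_tree I TE" and i0: "i0 \<in> I"
begin

lemma TE_sub: "TE \<subseteq> I \<times> I" using tree unfolding is_tree_def by auto
lemma TE_sym: "sym TE" using tree unfolding is_tree_def by auto
lemma TE_irrefl: "irrefl TE" using tree unfolding is_tree_def by auto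
lemma I_fin: "finite I" using tree unfolding is_tree_def by auto

lemma td_reach: "x \<in> I \<Longrightarrow> (i0, x) \<in> TE ^^ tdist TE i0 x"
proof -
  assume "x \<in> I"
  then have "(i0, x) \<in> TE\<^sup>*" using tree i0 unfolding is_tree_def by auto
  then obtain k where "(i0, x) \<in> TE ^^ k" using rtrancl_power by blast
  then show ?thesis unfolding tdist_def by (rule LeastI)
qed

lemma td_le: "(i0, x) \<in> TE ^^ k \<Longrightarrow> tdist TE i0 x \<le> k"
  unfolding tdist_def by (rule Least_le)

lemma td_edge: "(a, b) \<in> TE \<Longrightarrow> tdist TE i0 b \<le> tdist TE i0 a + 1"
proof -
  assume ab: "(a, b) \<in> TE"
  then have "a \<in> I" using TE_sub by auto
  then have "(i0, a) \<in> TE ^^ tdist TE i0 a" by (rule td_reach)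
  with ab have "(i0, b) \<in> TE ^^ Suc (tdist TE i0 a)" by auto
  then show ?thesis using td_le by fastforce
qed

lemma td_zero: "x \<in> I \<Longrightarrow> tdist TE i0 x = 0 \<longleftrightarrow> x = i0"
proof
  assume "x \<in> I" "tdist TE i0 x = 0"
  then show "x = i0" using td_reach[of x] by simp
next
  assume "x = i0" then show "tdist TE i0 x = 0" using td_le[of i0 0] by simp
qed

lemma par_ex: "x \<in> I \<Longrightarrow> x \<noteq> i0 \<Longrightarrow> \<exists>w. (w, x) \<in> TE \<and> tdist TE i0 w + 1 = tdist TE i0 x"
proof -
  assume x: "x \<in> I" "x \<noteq> i0"
  then obtain n where n: "tdist TE i0 x = Suc n" using td_zero[of x] by (cases "tdist TE i0 x") auto
  then have "(i0, x) \<in> TE ^^ Suc n" using td_reach[OF x(1)] by simp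
  then obtain w where w: "(i0, w) \<in> TE ^^ n" "(w, x) \<in> TE" by auto
  have "tdist TE i0 w \<le> n" using td_le[OF w(1)] .
  moreover have "tdist TE i0 x \<le> tdist TE i0 w + 1" using td_edge[OF w(2)] .
  ultimately have "tdist TE i0 w + 1 = tdist TE i0 x" using n by simp
  with w(2) show ?thesis by blast
qed

lemma par_prop: "x \<in> I \<Longrightarrow> x \<noteq> i0 \<Longrightarrow> (tpar TE i0 x, x) \<in> TE \<and> tdist TE i0 (tpar TE i0 x) + 1 = tdist TE i0 x"
  unfolding tpar_def by (rule someI_ex) (rule par_ex)

lemma edge_char:
  assumes ab: "(a, b) \<in> TE"
  shows "(b \<in> I \<and> b \<noteq> i0 \<and> a = tpar TE i0 b) \<or> (a \<in> I \<and> a \<noteq> i0 \<and> b = tpar TE i0 a)"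
proof -
  let ?J = "I - {i0}"
  define P1 where "P1 = (\<lambda>x. (tpar TE i0 x, x)) ` ?J"
  define P2 where "P2 = (\<lambda>x. (x, tpar TE i0 x)) ` ?J"
  have P1s: "P1 \<subseteq> TE" unfolding P1_def using par_prop by auto
  have P2s: "P2 \<subseteq> TE" unfolding P2_def using par_prop TE_sym by (auto dest: symD)
  have fin: "finite ?J" using I_fin by auto
  have c1: "card P1 = card I - 1" unfolding P1_def
    by (subst card_image) (auto simp: inj_on_def i0 I_fin)
  have c2: "card P2 = card I - 1" unfolding P2_def
    by (subst card_image) (auto simp: inj_on_def i0 I_fin)
  have disj: "P1 \<inter> P2 = {}"
  proof (rule ccontr)
    assume "P1 \<inter> P2 \<noteq> {}"
    then obtain p where "p \<in> P1" "p \<in> P2" by blast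
    then obtain x y where xy: "x \<in> ?J" "y \<in> ?J" "p = (tpar TE i0 x, x)" "p = (y, tpar TE i0 y)"
      unfolding P1_def P2_def by blast
    then have "y = tpar TE i0 x" "x = tpar TE i0 y" by auto
    then show False using par_prop[of x] par_prop[of y] xy by auto
  qed
  have finTE: "finite TE" using TE_sub I_fin finite_subset by (metis finite_SigmaI)
  have "card (P1 \<union> P2) = card TE"
    using c1 c2 disj card_Un_disjoint[of P1 P2] finite_subset[OF P1s finTE] finite_subset[OF P2s finTE]
      tree unfolding is_tree_def by auto
  then have "P1 \<union> P2 = TE" using P1s P2s finTE by (intro card_subset_eq) auto
  with ab have "(a, b) \<in> P1 \<or> (a, b) \<in> P2" by auto
  then show ?thesis unfolding P1_def P2_def by auto
qed

lemma edge_dist: "(a, b) \<in> TE \<Longrightarrow> tdist TE i0 a + 1 = tdist TE i0 b \<or> tdist TE i0 b + 1 = tdist TE i0 a"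
  using edge_char par_prop by metis

definition "PR = {(x, y). x \<in> I \<and> x \<noteq> i0 \<and> y = tpar TE i0 x}"

lemma PR_dist: "(x, i) \<in> PR\<^sup>* \<Longrightarrow> x = i \<or> tdist TE i0 x > tdist TE i0 i"
proof (induction rule: converse_rtrancl_induct)
  case base then show ?case by simp
next
  case (step x z)
  then have "tdist TE i0 z + 1 = tdist TE i0 x" using par_prop unfolding PR_def by auto
  with step show ?case by auto
qed

lemma walk_sub:
  assumes "(i, k) \<in> (TE \<inter> S \<times> S)\<^sup>*" "i \<in> I" "i \<noteq> i0" "tpar TE i0 i \<notin> S"
  shows "(k, i) \<in> PR\<^sup>*"
  using assms(1)
proof (induction rule: rtrancl_induct)
  case base then show ?case by simp
next
  case (step x y)
  then have xy: "(x, y) \<in> TE" "y \<in> S" by auto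
  from edge_char[OF xy(1)] show ?case
  proof
    assume "y \<in> I \<and> y \<noteq> i0 \<and> x = tpar TE i0 y"
    then have "(y, x) \<in> PR" unfolding PR_def by auto
    with step.IH show ?thesis by auto
  next
    assume H: "x \<in> I \<and> x \<noteq> i0 \<and> y = tpar TE i0 x"
    show ?thesis
    proof (cases "x = i")
      case True then show ?thesis using H xy assms(4) by auto
    next
      case False
      from step.IH show ?thesis
      proof (cases rule: converse_rtranclE)
        case base then show ?thesis using False by simp
      next
        case (step z) then show ?thesis using H unfolding PR_def by auto
      qed
    qed
  qed
qed

end



definition coin :: "bool pmf" where "coin = pmf_of_set UNIV"

definition mu' :: "'v \<Rightarrow> ('v set \<Rightarrow> 'v assignment pmf) \<Rightarrow> 'v set \<Rightarrow> 'v assignment pmf" where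
  "mu' e \<mu> L' = map_pmf (\<lambda>(c, g). Tm e c (g |` (L' - {e}))) (pair_pmf coin (\<mu> (L' - {e})))"

lemma set_coin[simp]: "set_pmf coin = UNIV"
  unfolding coin_def by simp

lemma range_Not: "range Not = (UNIV::bool set)"
proof (rule set_eqI)
  fix b :: bool
  have "b = Not (Not b)" by simp
  then show "b \<in> range Not \<longleftrightarrow> b \<in> UNIV" by blast
qed

lemma map_Not_coin: "map_pmf Not coin = coin"
  unfolding coin_def using map_pmf_of_set_inj[of Not "UNIV::bool set"] range_Not
  by (simp add: inj_on_def)

lemma pmf_coin: "pmf coin c = 1/2"
proof -
  have "pmf coin c = indicator UNIV c / real (card (UNIV::bool set))"
    unfolding coin_def by (rule pmf_of_set) auto
  then show ?thesis by simp
qed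

lemma mu'_marg:
  assumes "e \<in> X"
  shows "map_pmf (\<lambda>g. g |` X) (mu' e \<mu> L') =
    map_pmf (\<lambda>(c, g). Tm e c g) (pair_pmf coin (map_pmf (\<lambda>g. g |` ((L' - {e}) \<inter> (X - {e}))) (\<mu> (L' - {e}))))"
  unfolding mu'_def pair_map_pmf2 map_pmf_comp
  by (rule map_pmf_cong) (auto simp: Tm_restrict_in assms apsnd_def map_prod_def)

lemma mirror_mu': "map_pmf mirror (mu' e \<mu> L') = mu' e \<mu> L'"
proof -
  have "map_pmf mirror (mu' e \<mu> L') =
     map_pmf (\<lambda>(c, g). Tm e c (g |` (L' - {e}))) (map_pmf (\<lambda>(c, g). (Not c, id g)) (pair_pmf coin (\<mu> (L' - {e}))))"
    unfolding mu'_def map_pmf_comp by (rule map_pmf_cong) (auto simp: mirror_Tm)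
  also have "map_pmf (\<lambda>(c, g). (Not c, id g)) (pair_pmf coin (\<mu> (L' - {e}))) = pair_pmf (map_pmf Not coin) (map_pmf id (\<mu> (L' - {e})))"
    by (rule map_pair)
  also have "\<dots> = pair_pmf coin (\<mu> (L' - {e}))"
    by (simp only: map_Not_coin pmf.map_id)
  finally show ?thesis unfolding mu'_def .
qed

lemma pmf_mirror_mu': "pmf (mu' e \<mu> L') (mirror g) = pmf (mu' e \<mu> L') g"
proof -
  have "pmf (mu' e \<mu> L') (mirror g) = pmf (map_pmf mirror (mu' e \<mu> L')) (mirror g)"
    by (simp only: mirror_mu')
  also have "\<dots> = pmf (mu' e \<mu> L') g" by (rule pmf_map_inj'[OF inj_mirror])
  finally show ?thesis .
qed

lemma cond_pair_coin:
  assumes "set_pmf q \<inter> A \<noteq> {}"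
  shows "cond_pmf (pair_pmf coin q) ({c} \<times> A) = map_pmf (Pair c) (cond_pmf q A)"
proof (rule pmf_eqI)
  fix x :: "bool \<times> 'a"
  obtain c' g where x: "x = (c', g)" by (cases x)
  obtain g0 where g0: "g0 \<in> set_pmf q" "g0 \<in> A" using assms by blast
  then have "(c, g0) \<in> set_pmf (pair_pmf coin q) \<inter> ({c} \<times> A)" by simp
  then have ne: "set_pmf (pair_pmf coin q) \<inter> ({c} \<times> A) \<noteq> {}" by blast
  have meas: "measure_pmf.prob (pair_pmf coin q) ({c} \<times> A) = pmf coin c * measure_pmf.prob q A"
  proof -
    have "measure_pmf.prob (pair_pmf coin q) ({c} \<times> A) =
        measure_pmf.prob (map_pmf (\<lambda>(a, b). (a, b \<in> A)) (pair_pmf coin q)) {(c, True)}"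
    proof -
      have "(\<lambda>(a, b). (a, b \<in> A)) -` {(c, True)} = {c} \<times> A" by auto
      then show ?thesis by (simp only: measure_map_pmf)
    qed
    also have "map_pmf (\<lambda>(a, b). (a, b \<in> A)) (pair_pmf coin q) = pair_pmf coin (map_pmf (\<lambda>b. b \<in> A) q)"
      using map_pair[of id "\<lambda>b. b \<in> A" coin q] by (simp add: id_def)
    also have "measure_pmf.prob \<dots> {(c, True)} = pmf coin c * pmf (map_pmf (\<lambda>b. b \<in> A) q) True"
      by (simp add: measure_pmf_single pmf_pair)
    also have "pmf (map_pmf (\<lambda>b. b \<in> A) q) True = measure_pmf.prob q A"
      by (simp add: pmf_map vimage_def)
    finally show ?thesis .
  qed
  have mpos: "measure_pmf.prob q A \<noteq> 0" using measure_measure_pmf_not_zero[OF assms] .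
  show "pmf (cond_pmf (pair_pmf coin q) ({c} \<times> A)) x = pmf (map_pmf (Pair c) (cond_pmf q A)) x"
  proof (cases "c' = c")
    case True
    have cz: "pmf coin c \<noteq> 0" by (simp add: pmf_coin)
    show ?thesis
    proof (cases "g \<in> A")
      case gA: True
      have xin: "x \<in> {c} \<times> A" using gA True x by simp
      have "pmf (cond_pmf (pair_pmf coin q) ({c} \<times> A)) x =
          pmf (pair_pmf coin q) x / measure_pmf.prob (pair_pmf coin q) ({c} \<times> A)"
        using pmf_cond[OF ne, of x] xin by (simp only: if_P if_True)
      also have "\<dots> = pmf coin c * pmf q g / (pmf coin c * measure_pmf.prob q A)"
        by (simp only: x True meas pmf_pair)
      also have "\<dots> = pmf q g / measure_pmf.prob q A"
        using cz by simp
      also have "\<dots> = pmf (cond_pmf q A) g" using pmf_cond[OF assms, of g] gA by (simp only: if_P if_True)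
      also have "\<dots> = pmf (map_pmf (Pair c) (cond_pmf q A)) x"
        unfolding x True by (rule pmf_map_inj'[symmetric]) (auto simp: inj_on_def)
      finally show ?thesis .
    next
      case gA: False
      have xin: "x \<notin> {c} \<times> A" using gA True x by simp
      have "pmf (cond_pmf (pair_pmf coin q) ({c} \<times> A)) x = 0"
        using pmf_cond[OF ne, of x] xin by (simp only: if_not_P if_False)
      moreover have "pmf (cond_pmf q A) g = 0" using pmf_cond[OF assms, of g] gA by (simp only: if_not_P if_False)
      moreover have "pmf (map_pmf (Pair c) (cond_pmf q A)) x = pmf (cond_pmf q A) g"
        unfolding x True by (rule pmf_map_inj') (auto simp: inj_on_def)
      ultimately show ?thesis by simp
    qed
  next
    case False
    have "x \<notin> set_pmf (map_pmf (Pair c) (cond_pmf q A))" using False x by auto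
    then have "pmf (map_pmf (Pair c) (cond_pmf q A)) x = 0" by (metis pmf_eq_0_set_pmf)
    moreover have xin: "x \<notin> {c} \<times> A" using False x by simp
    have "pmf (cond_pmf (pair_pmf coin q) ({c} \<times> A)) x = 0"
      using pmf_cond[OF ne, of x] xin by (simp only: if_not_P if_False)
    ultimately show ?thesis by simp
  qed
qed



context
  fixes V :: "'v set" and E :: "('v \<times> 'v) set"
    and I :: "'n set" and TE :: "('n \<times> 'n) set" and B :: "'n \<Rightarrow> 'v set"
    and \<mu> :: "'v set \<Rightarrow> 'v assignment pmf" and i0 :: 'n and ns :: "'n list" and e :: 'v
  assumes td: "tree_decomposition V E I TE B"
    and cf: "consistent_family V I B \<mu>"
    and so: "sc_order I TE i0 ns"
    and eV: "e \<notin> V"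
begin

lemma tree: "is_tree I TE" using td unfolding tree_decomposition_def by auto
lemma BV: "i \<in> I \<Longrightarrow> B i \<subseteq> V" using td unfolding tree_decomposition_def by auto
lemma eB: "i \<in> I \<Longrightarrow> e \<notin> B i" using BV eV by auto
lemma i0I: "i0 \<in> I" using so unfolding sc_order_def by auto

lemma Bfam: "i \<in> I \<Longrightarrow> B i \<noteq> {} \<Longrightarrow> B i \<in> fam_sets V I B"
proof -
  assume i: "i \<in> I" "B i \<noteq> {}"
  then obtain x where x: "x \<in> B i" by auto
  then have "B i = B i \<union> {x, x}" by auto
  then show ?thesis unfolding fam_sets_def using i x BV[OF i(1)] by blast
qed

lemma fam_dom: "L \<in> fam_sets V I B \<Longrightarrow> g \<in> set_pmf (\<mu> L) \<Longrightarrow> dom g = L"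
  using cf unfolding consistent_family_def by auto

lemma fam_marg: "L \<in> fam_sets V I B \<Longrightarrow> L' \<in> fam_sets V I B \<Longrightarrow>
   map_pmf (\<lambda>g. g |` (L \<inter> L')) (\<mu> L) = map_pmf (\<lambda>g. g |` (L \<inter> L')) (\<mu> L')"
  using cf unfolding consistent_family_def by auto

lemma famI: "i \<in> I \<Longrightarrow> s \<in> V \<Longrightarrow> t \<in> V \<Longrightarrow> B i \<union> {s, t} \<in> fam_sets V I B"
  unfolding fam_sets_def by blast

lemma fam_split:
  assumes "L' \<in> fam_sets (insert e V) I (\<lambda>i. insert e (B i))"
  shows "e \<in> L' \<and> (L' - {e} = {} \<or> L' - {e} \<in> fam_sets V I B)"
proof -
  obtain i s t where L': "L' = insert e (B i) \<union> {s, t}" "i \<in> I" "s \<in> insert e V" "t \<in> insert e V"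
    using assms unfolding fam_sets_def by blast
  have ei: "e \<notin> B i" using eB[OF L'(2)] .
  have "L' - {e} = {} \<or> L' - {e} \<in> fam_sets V I B"
  proof (cases "s = e")
    case True
    show ?thesis
    proof (cases "t = e")
      case True
      then have "L' - {e} = B i" using \<open>s = e\<close> ei unfolding L'(1) by blast
      then show ?thesis using Bfam[OF L'(2)] by auto
    next
      case False
      then have "L' - {e} = B i \<union> {t, t}" using \<open>s = e\<close> ei unfolding L'(1) by blast
      moreover have "t \<in> V" using False L'(4) by blast
      ultimately show ?thesis using famI[OF L'(2)] by metis
    qed
  next
    case False
    show ?thesis
    proof (cases "t = e")
      case True
      then have "L' - {e} = B i \<union> {s, s}" using \<open>s \<noteq> e\<close> ei unfolding L'(1) by blast
      moreover have "s \<in> V" using \<open>s \<noteq> e\<close> L'(3) by blast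
      ultimately show ?thesis using famI[OF L'(2)] by metis
    next
      case False
      then have "L' - {e} = B i \<union> {s, t}" using \<open>s \<noteq> e\<close> ei unfolding L'(1) by blast
      moreover have "s \<in> V" using \<open>s \<noteq> e\<close> L'(3) by blast
      moreover have "t \<in> V" using False L'(4) by blast
      ultimately show ?thesis using famI[OF L'(2)] by metis
    qed
  qed
  moreover have "e \<in> L'" unfolding L'(1) by blast
  ultimately show ?thesis by blast
qed

lemma marg_gen:
  assumes "L1 = {} \<or> L1 \<in> fam_sets V I B" "L2 = {} \<or> L2 \<in> fam_sets V I B"
  shows "map_pmf (\<lambda>g. g |` (L1 \<inter> L2)) (\<mu> L1) = map_pmf (\<lambda>g. g |` (L1 \<inter> L2)) (\<mu> L2)"
proof (cases "L1 = {} \<or> L2 = {}")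
  case True then show ?thesis by auto
next
  case False then show ?thesis using assms fam_marg by auto
qed

lemma cons': "consistent_family (insert e V) I (\<lambda>i. insert e (B i)) (mu' e \<mu>)"
  unfolding consistent_family_def
proof (intro conjI ballI)
  fix L' g assume L': "L' \<in> fam_sets (insert e V) I (\<lambda>i. insert e (B i))"
    and g: "g \<in> set_pmf (mu' e \<mu> L')"
  from g obtain c h where h: "h \<in> set_pmf (\<mu> (L' - {e}))" "g = Tm e c (h |` (L' - {e}))"
    unfolding mu'_def by auto
  from fam_split[OF L'] show "dom g = L'"
  proof (elim conjE disjE)
    assume "e \<in> L'" "L' - {e} = {}"
    then show ?thesis using h by auto
  next
    assume "e \<in> L'" "L' - {e} \<in> fam_sets V I B"
    then show ?thesis using h fam_dom by auto
  qed
next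
  fix L1 L2 assume L1: "L1 \<in> fam_sets (insert e V) I (\<lambda>i. insert e (B i))"
    and L2: "L2 \<in> fam_sets (insert e V) I (\<lambda>i. insert e (B i))"
  have e1: "e \<in> L1" and e2: "e \<in> L2" using fam_split L1 L2 by auto
  have a: "(L1 - {e}) \<inter> (L1 \<inter> L2 - {e}) = (L1 - {e}) \<inter> (L2 - {e})" by auto
  have b: "(L2 - {e}) \<inter> (L1 \<inter> L2 - {e}) = (L1 - {e}) \<inter> (L2 - {e})" by auto
  have m: "map_pmf (\<lambda>g. g |` ((L1 - {e}) \<inter> (L2 - {e}))) (\<mu> (L1 - {e})) =
           map_pmf (\<lambda>g. g |` ((L1 - {e}) \<inter> (L2 - {e}))) (\<mu> (L2 - {e}))"
    by (rule marg_gen) (use fam_split L1 L2 in auto)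
  show "map_pmf (\<lambda>g. g |` (L1 \<inter> L2)) (mu' e \<mu> L1) = map_pmf (\<lambda>g. g |` (L1 \<inter> L2)) (mu' e \<mu> L2)"
    using e1 e2 by (simp only: mu'_marg a b m IntI)
qed

lemma sym': "symmetric_family (insert e V) I (\<lambda>i. insert e (B i)) (mu' e \<mu>)"
  unfolding symmetric_family_def using pmf_mirror_mu' by metis


lemma list_facts:
  assumes ns: "ns = dn @ i # is" and dn: "dn \<noteq> []"
  shows "i \<in> I" "i \<noteq> i0" "\<forall>k\<in>set dn. k \<in> I \<and> k \<noteq> i \<and> tdist TE i0 k \<le> tdist TE i0 i"
    "tpar TE i0 i \<in> set dn" "(SOME j. j \<in> set dn \<and> (j, i) \<in> TE) = tpar TE i0 i"
proof -
  have hd: "hd ns = i0" and dist: "distinct ns" and setns: "set ns = I"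
    and srt: "sorted (map (tdist TE i0) ns)" using so unfolding sc_order_def by auto
  have i0dn: "i0 \<in> set dn" using hd dn ns by (cases dn) auto
  have iI: "i \<in> I" using setns ns by auto
  have idn: "i \<notin> set dn" "i \<notin> set is" using dist ns by auto
  show "i \<in> I" by (rule iI)
  show ine: "i \<noteq> i0" using i0dn idn by auto
  have s1: "\<forall>k\<in>set dn. tdist TE i0 k \<le> tdist TE i0 i"
    using srt unfolding ns by (auto simp: sorted_append)
  have s2: "\<forall>k\<in>set is. tdist TE i0 i \<le> tdist TE i0 k"
    using srt unfolding ns by (auto simp: sorted_append)
  have dnI: "set dn \<subseteq> I" using setns ns by auto
  show kf: "\<forall>k\<in>set dn. k \<in> I \<and> k \<noteq> i \<and> tdist TE i0 k \<le> tdist TE i0 i"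
    using s1 dnI idn by auto
  have pp: "(tpar TE i0 i, i) \<in> TE" "tdist TE i0 (tpar TE i0 i) + 1 = tdist TE i0 i"
    using par_prop[OF tree i0I iI ine] by auto
  have pI: "tpar TE i0 i \<in> I" using pp(1) TE_sub[OF tree i0I] by auto
  then have "tpar TE i0 i \<in> set ns" using setns by simp
  moreover have "tpar TE i0 i \<noteq> i" using pp(2) by auto
  moreover have "tpar TE i0 i \<notin> set is" using s2 pp(2) by fastforce
  ultimately show pdn: "tpar TE i0 i \<in> set dn" using ns by auto
  have ex: "\<exists>j. j \<in> set dn \<and> (j, i) \<in> TE" using pdn pp(1) by blast
  define j where "j = (SOME j. j \<in> set dn \<and> (j, i) \<in> TE)"
  have j: "j \<in> set dn" "(j, i) \<in> TE" using someI_ex[OF ex] unfolding j_def by auto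
  from edge_char[OF tree i0I j(2)] show "(SOME j. j \<in> set dn \<and> (j, i) \<in> TE) = tpar TE i0 i"
  proof
    assume "i \<in> I \<and> i \<noteq> i0 \<and> j = tpar TE i0 i" then show ?thesis unfolding j_def by simp
  next
    assume H: "j \<in> I \<and> j \<noteq> i0 \<and> i = tpar TE i0 j"
    then have "tdist TE i0 i + 1 = tdist TE i0 j" using par_prop[OF tree i0I, of j] by auto
    moreover have "tdist TE i0 j \<le> tdist TE i0 i" using s1 j(1) by auto
    ultimately show ?thesis by simp
  qed
qed

lemma no_overwrite:
  assumes "i \<in> I" "i \<noteq> i0" "k \<in> I" "k \<noteq> i" "tdist TE i0 k \<le> tdist TE i0 i" "v \<in> B i" "v \<in> B k"
  shows "v \<in> B (tpar TE i0 i)"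
proof (rule ccontr)
  assume nv: "v \<notin> B (tpar TE i0 i)"
  let ?S = "{k \<in> I. v \<in> B k}"
  have vV: "v \<in> V" using BV assms(1,6) by auto
  have "(i, k) \<in> (TE \<inter> ?S \<times> ?S)\<^sup>*"
    using td vV assms unfolding tree_decomposition_def by blast
  moreover have "tpar TE i0 i \<notin> ?S" using nv by auto
  ultimately have "(k, i) \<in> (PR I TE i0)\<^sup>*" using walk_sub[OF tree i0I] assms(1,2) by blast
  then have "k = i \<or> tdist TE i0 k > tdist TE i0 i" using PR_dist[OF tree i0I] by blast
  then show False using assms(4,5) by auto
qed

definition "INV dn f \<longleftrightarrow> (\<forall>k\<in>set dn. B k \<noteq> {} \<longrightarrow> f |` B k \<in> set_pmf (\<mu> (B k)))"

lemma nonempty_ev: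
  assumes "INV dn f" "j \<in> set dn" "j \<in> I" "i \<in> I"
  shows "\<exists>g\<in>set_pmf (\<mu> (B i)). g |` (B i \<inter> B j) = f |` (B i \<inter> B j)"
proof (cases "B i = {} \<or> B j = {}")
  case True
  then have "B i \<inter> B j = {}" by auto
  moreover obtain g where "g \<in> set_pmf (\<mu> (B i))" using set_pmf_not_empty by fast
  ultimately show ?thesis by auto
next
  case False
  have fj: "f |` B j \<in> set_pmf (\<mu> (B j))" using assms False unfolding INV_def by auto
  have m: "map_pmf (\<lambda>g. g |` (B i \<inter> B j)) (\<mu> (B i)) = map_pmf (\<lambda>g. g |` (B i \<inter> B j)) (\<mu> (B j))"
    using fam_marg Bfam assms(3,4) False by auto
  have "(f |` B j) |` (B i \<inter> B j) \<in> set_pmf (map_pmf (\<lambda>g. g |` (B i \<inter> B j)) (\<mu> (B j)))"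
    unfolding set_map_pmf by (rule imageI[OF fj])
  then have "f |` (B i \<inter> B j) \<in> set_pmf (map_pmf (\<lambda>g. g |` (B i \<inter> B j)) (\<mu> (B i)))"
    unfolding m by (simp add: Int_commute Int_left_commute)
  then show ?thesis by auto
qed

lemma inv_step:
  assumes inv: "INV dn f" and ns: "ns = dn @ i # is" and dn: "dn \<noteq> []"
    and g: "g \<in> set_pmf (\<mu> (B i))" "g |` (B i \<inter> B (tpar TE i0 i)) = f |` (B i \<inter> B (tpar TE i0 i))"
  shows "INV (dn @ [i]) (f ++ g |` (B i - B i \<inter> B (tpar TE i0 i)))"
proof -
  note lf = list_facts[OF ns dn]
  let ?Bp = "B i \<inter> B (tpar TE i0 i)"
  let ?Bm = "B i - ?Bp"
  let ?f = "f ++ g |` ?Bm"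
  have ki: "?f |` B i = g" if ne: "B i \<noteq> {}"
  proof -
    have dg: "dom g = B i" using fam_dom[OF Bfam[OF lf(1) ne] g(1)] .
    show ?thesis
    proof (rule ext)
      fix x show "(?f |` B i) x = g x"
      proof (cases "x \<in> ?Bm")
        case True then show ?thesis using dg by (auto simp: map_add_def restrict_map_def split: option.split)
      next
        case False
        show ?thesis
        proof (cases "x \<in> ?Bp")
          case True
          have "(f |` ?Bp) x = (g |` ?Bp) x" using g(2) by simp
          then have "f x = g x" using True by (simp add: restrict_map_def)
          then show ?thesis using True False by (auto simp: map_add_def restrict_map_def)
        next
          case False2: False
          then have "x \<notin> B i" using False by auto
          then have "g x = None" using dg by auto
          then show ?thesis using \<open>x \<notin> B i\<close> by (simp add: restrict_map_def)
        qed
      qed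
    qed
  qed
  have kk: "?f |` B k = f |` B k" if k: "k \<in> set dn" for k
  proof (rule ext)
    fix x show "(?f |` B k) x = (f |` B k) x"
    proof (cases "x \<in> B k \<and> x \<in> ?Bm")
      case True
      have "x \<in> B (tpar TE i0 i)"
        using no_overwrite[OF lf(1) lf(2), of k x] lf(3) k True by auto
      then show ?thesis using True by auto
    next
      case False then show ?thesis by (auto simp: map_add_def restrict_map_def)
    qed
  qed
  show ?thesis unfolding INV_def
  proof
    fix k assume "k \<in> set (dn @ [i])"
    then consider "k \<in> set dn" | "k = i" by auto
    then show "B k \<noteq> {} \<longrightarrow> ?f |` B k \<in> set_pmf (\<mu> (B k))"
    proof cases
      case 1 then show ?thesis using kk inv unfolding INV_def by auto
    next
      case 2 then show ?thesis using ki g(1) by auto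
    qed
  qed
qed

lemma dom_steps:
  "set is \<subseteq> I \<Longrightarrow> dom f \<subseteq> V \<Longrightarrow> h \<in> set_pmf (sc_steps is \<mu> B TE dn f) \<Longrightarrow> dom h \<subseteq> V"
proof (induction "is" arbitrary: dn f)
  case Nil then show ?case by simp
next
  case (Cons i "is")
  from Cons.prems(3) obtain g where
    "h \<in> set_pmf (sc_steps is \<mu> B TE (dn @ [i])
       (f ++ g |` (B i - B i \<inter> B (SOME j. j \<in> set dn \<and> (j, i) \<in> TE))))"
    by (auto simp: Let_def)
  moreover have "B i \<subseteq> V" using BV Cons.prems(1) by auto
  moreover have "dom (f ++ g |` (B i - B i \<inter> B (SOME j. j \<in> set dn \<and> (j, i) \<in> TE))) \<subseteq> V"
    using Cons.prems(2) \<open>B i \<subseteq> V\<close> by auto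
  moreover have "set is \<subseteq> I" using Cons.prems(1) by auto
  ultimately show ?case using Cons.IH by blast
qed


lemma steps:
  "ns = dn @ is \<Longrightarrow> dn \<noteq> [] \<Longrightarrow> INV dn f \<Longrightarrow>
   sc_steps is (mu' e \<mu>) (\<lambda>i. insert e (B i)) TE dn (Tm e c f) = map_pmf (Tm e c) (sc_steps is \<mu> B TE dn f)"
proof (induction "is" arbitrary: dn f)
  case Nil then show ?case by simp
next
  case (Cons i "is")
  have ns: "ns = dn @ i # is" using Cons.prems(1) by simp
  note lf = list_facts[OF ns Cons.prems(2)]
  define j where "j = tpar TE i0 i"
  define Bp where "Bp = B i \<inter> B j"
  define Bm where "Bm = B i - Bp"
  define A where "A = {g. g |` Bp = f |` Bp}"
  define F where "F = (\<lambda>(c::bool, g). Tm e c (g |` B i))"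
  have eBi: "e \<notin> B i" using eB lf(1) by auto
  have jI: "j \<in> I" "j \<in> set dn" using lf(4) lf(3) unfolding j_def by auto
  have eBp: "e \<notin> Bp" "e \<notin> Bm" using eBi unfolding Bp_def Bm_def by auto
  have e1: "insert e (B i) \<inter> insert e (B j) = insert e Bp" unfolding Bp_def by auto
  have e2: "insert e (B i) - insert e Bp = Bm" using eBi unfolding Bm_def by auto
  have mu: "mu' e \<mu> (insert e (B i)) = map_pmf F (pair_pmf coin (\<mu> (B i)))"
    unfolding mu'_def F_def using eBi by simp
  have pre: "F -` {g'. g' |` insert e Bp = Tm e c f |` insert e Bp} = {c} \<times> A"
  proof (rule set_eqI)
    fix x :: "bool \<times> 'v assignment"
    obtain c' g where x: "x = (c', g)" by (cases x)
    have "F x |` insert e Bp = Tm e c' (g |` Bp)"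
      unfolding x F_def using eBp by (simp add: Tm_restrict_in Bp_def Int_absorb1 insert_Diff_if)
    moreover have "Tm e c f |` insert e Bp = Tm e c (f |` Bp)"
      using eBp by (simp add: Tm_restrict_in)
    ultimately show "x \<in> F -` {g'. g' |` insert e Bp = Tm e c f |` insert e Bp} \<longleftrightarrow> x \<in> {c} \<times> A"
      using Tm_eq_iff[of e "g |` Bp" "f |` Bp" c' c] eBp unfolding x A_def by auto
  qed
  have neA: "set_pmf (\<mu> (B i)) \<inter> A \<noteq> {}"
    using nonempty_ev[OF Cons.prems(3) jI(2) jI(1) lf(1)] unfolding A_def Bp_def by auto
  have ne: "set_pmf (pair_pmf coin (\<mu> (B i))) \<inter> F -` {g'. g' |` insert e Bp = Tm e c f |` insert e Bp} \<noteq> {}"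
    unfolding pre using neA by auto
  have cond: "cond_pmf (mu' e \<mu> (insert e (B i))) {g'. g' |` insert e Bp = Tm e c f |` insert e Bp}
      = map_pmf F (map_pmf (Pair c) (cond_pmf (\<mu> (B i)) A))"
    unfolding mu cond_map_pmf[OF ne] pre cond_pair_coin[OF neA] ..
  have sj: "(SOME j. j \<in> set dn \<and> (j, i) \<in> TE) = j" using lf(5) unfolding j_def .
  have lhs: "sc_steps (i # is) (mu' e \<mu>) (\<lambda>i. insert e (B i)) TE dn (Tm e c f) =
     bind_pmf (cond_pmf (mu' e \<mu> (insert e (B i))) {g'. g' |` insert e Bp = Tm e c f |` insert e Bp})
       (\<lambda>g'. sc_steps is (mu' e \<mu>) (\<lambda>i. insert e (B i)) TE (dn @ [i]) (Tm e c f ++ g' |` Bm))"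
    by (simp only: sc_steps.simps Let_def sj e1 e2)
  have rhs: "sc_steps (i # is) \<mu> B TE dn f =
     bind_pmf (cond_pmf (\<mu> (B i)) A) (\<lambda>g. sc_steps is \<mu> B TE (dn @ [i]) (f ++ g |` Bm))"
    unfolding A_def Bm_def Bp_def by (simp only: sc_steps.simps Let_def sj)
  have step: "sc_steps is (mu' e \<mu>) (\<lambda>i. insert e (B i)) TE (dn @ [i]) (Tm e c f ++ F (c, g) |` Bm)
      = map_pmf (Tm e c) (sc_steps is \<mu> B TE (dn @ [i]) (f ++ g |` Bm))"
    if g: "g \<in> set_pmf (cond_pmf (\<mu> (B i)) A)" for g
  proof -
    have gs: "g \<in> set_pmf (\<mu> (B i))" "g |` Bp = f |` Bp" using g neA unfolding A_def by auto
    have "F (c, g) |` Bm = (if c then g |` Bm else mirror (g |` Bm))"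
      unfolding F_def using eBp by (simp add: Tm_restrict_out Bm_def Int_absorb1)
    then have "Tm e c f ++ F (c, g) |` Bm = Tm e c (f ++ g |` Bm)"
      using Tm_add[of e "g |` Bm" c f] eBp by simp
    moreover have "INV (dn @ [i]) (f ++ g |` Bm)"
      using inv_step[OF Cons.prems(3) ns Cons.prems(2) gs(1)] gs(2) unfolding Bm_def Bp_def j_def by simp
    ultimately show ?thesis using Cons.IH[of "dn @ [i]" "f ++ g |` Bm"] ns by simp
  qed
  show ?case
    unfolding lhs rhs cond bind_map_pmf map_bind_pmf
    by (rule bind_pmf_cong[OF refl]) (simp add: step)
qed


lemma restrict_dom_id: "dom h \<subseteq> X \<Longrightarrow> h |` X = h"
proof (rule ext)
  fix x assume d: "dom h \<subseteq> X"
  show "(h |` X) x = h x"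
  proof (cases "x \<in> X")
    case True then show ?thesis by simp
  next
    case False
    then have "x \<notin> dom h" using d by blast
    then show ?thesis using False by (simp add: domIff)
  qed
qed

lemma round':
  "sc_round (mu' e \<mu>) (\<lambda>i. insert e (B i)) TE ns = bind_pmf coin (\<lambda>c. map_pmf (Tm e c) (sc_round \<mu> B TE ns))"
proof -
  have hd: "hd ns = i0" and nsne: "ns \<noteq> []" using so unfolding sc_order_def by auto
  have ns1: "ns = [i0] @ tl ns" using hd nsne by (cases ns) auto
  have eB0: "e \<notin> B i0" using eB i0I by auto
  define F where "F = (\<lambda>(c::bool, g). Tm e c (g |` B i0))"
  have mu0: "mu' e \<mu> (insert e (B i0)) = map_pmf F (pair_pmf coin (\<mu> (B i0)))"
    unfolding mu'_def F_def using eB0 by simp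
  have inv0: "INV [i0] (g |` B i0)" if g: "g \<in> set_pmf (\<mu> (B i0))" for g
    unfolding INV_def
  proof (intro ballI impI)
    fix k assume "k \<in> set [i0]" "B k \<noteq> {}"
    then have k: "k = i0" "B i0 \<noteq> {}" by auto
    have "dom g = B i0" using fam_dom[OF Bfam[OF i0I k(2)] g] .
    then have "g |` B i0 = g" by (simp add: restrict_dom_id)
    then show "g |` B i0 |` B k \<in> set_pmf (\<mu> (B k))" using g k by simp
  qed
  have Fr: "F (c, g) |` insert e (B i0) = Tm e c (g |` B i0)" for c g
    unfolding F_def using eB0 by (simp add: Tm_restrict_in)
  have "sc_round (mu' e \<mu>) (\<lambda>i. insert e (B i)) TE ns =
     bind_pmf (pair_pmf coin (\<mu> (B i0))) (\<lambda>x. sc_steps (tl ns) (mu' e \<mu>) (\<lambda>i. insert e (B i)) TE [i0] (F x |` insert e (B i0)))"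
    unfolding sc_round_def hd mu0 bind_map_pmf ..
  also have "\<dots> = bind_pmf coin (\<lambda>c. bind_pmf (\<mu> (B i0)) (\<lambda>g.
       sc_steps (tl ns) (mu' e \<mu>) (\<lambda>i. insert e (B i)) TE [i0] (Tm e c (g |` B i0))))"
    unfolding pair_pmf_def bind_assoc_pmf bind_return_pmf Fr ..
  also have "\<dots> = bind_pmf coin (\<lambda>c. bind_pmf (\<mu> (B i0)) (\<lambda>g.
       map_pmf (Tm e c) (sc_steps (tl ns) \<mu> B TE [i0] (g |` B i0))))"
    by (intro bind_pmf_cong[OF refl]) (rule steps[OF ns1], auto intro: inv0)
  also have "\<dots> = bind_pmf coin (\<lambda>c. map_pmf (Tm e c) (sc_round \<mu> B TE ns))"
    unfolding sc_round_def hd map_bind_pmf ..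
  finally show ?thesis .
qed

lemma domD: "h \<in> set_pmf (sc_round \<mu> B TE ns) \<Longrightarrow> dom h \<subseteq> V"
proof -
  assume h: "h \<in> set_pmf (sc_round \<mu> B TE ns)"
  have hd: "hd ns = i0" and setns: "set ns = I" and nsne: "ns \<noteq> []" using so unfolding sc_order_def by auto
  have tl: "set (tl ns) \<subseteq> I" using setns nsne by (cases ns) auto
  from h obtain g where "h \<in> set_pmf (sc_steps (tl ns) \<mu> B TE [i0] (g |` B i0))"
    unfolding sc_round_def hd by auto
  moreover have "dom (g |` B i0) \<subseteq> V" using BV[OF i0I] by auto
  ultimately show ?thesis using dom_steps tl by blast
qed

lemma final:
  "pmf (sc_round \<mu> B TE ns) f' + pmf (sc_round \<mu> B TE ns) (mirror f')
   = pmf (map_pmf (\<lambda>h. h |` V) (sc_round (mu' e \<mu>) (\<lambda>i. insert e (B i)) TE ns)) f'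
     + pmf (map_pmf (\<lambda>h. h |` V) (sc_round (mu' e \<mu>) (\<lambda>i. insert e (B i)) TE ns)) (mirror f')"
proof -
  define D where "D = sc_round \<mu> B TE ns"
  define K where "K = (\<lambda>c. map_pmf (\<lambda>h. Tm e c h |` V) D)"
  have D2: "map_pmf (\<lambda>h. h |` V) (sc_round (mu' e \<mu>) (\<lambda>i. insert e (B i)) TE ns) = bind_pmf coin K"
    unfolding round' map_bind_pmf map_pmf_comp K_def D_def ..
  have KT: "K True = D"
  proof -
    have "K True = map_pmf (\<lambda>h. h) D" unfolding K_def
      by (rule map_pmf_cong[OF refl]) (use domD eV in \<open>simp add: D_def Tm_restrict_out restrict_dom_id\<close>)
    then show ?thesis by simp
  qed
  have KF: "K False = map_pmf mirror D" unfolding K_def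
    by (rule map_pmf_cong[OF refl]) (use domD eV in \<open>simp add: D_def Tm_restrict_out restrict_dom_id\<close>)
  have pm: "pmf (map_pmf mirror D) y = pmf D (mirror y)" for y
    using pmf_map_inj'[OF inj_mirror, of D "mirror y"] by simp
  have py: "pmf (bind_pmf coin K) y = (pmf D y + pmf D (mirror y)) / 2" for y
  proof -
    have "pmf (bind_pmf coin K) y = (\<Sum>c\<in>UNIV. pmf (K c) y) / real (card (UNIV :: bool set))"
      unfolding coin_def by (rule pmf_bind_pmf_of_set) auto
    also have "\<dots> = (pmf (K True) y + pmf (K False) y) / 2" by (simp add: UNIV_bool add.commute)
    finally show ?thesis unfolding KT KF pm .
  qed
  show ?thesis unfolding D2 py D_def[symmetric] by (simp add: field_simps)
qed

end

theorem lemmaA2: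
  fixes V :: "'v set" and E :: "('v \<times> 'v) set"
    and I :: "'n set" and TE :: "('n \<times> 'n) set" and B :: "'n \<Rightarrow> 'v set"
    and \<mu> :: "'v set \<Rightarrow> 'v assignment pmf" and i0 :: 'n and ns :: "'n list" and e :: 'v
  assumes "tree_decomposition V E I TE B"
    and "consistent_family V I B \<mu>"
    and "sc_order I TE i0 ns"
    and "e \<notin> V"
  shows "\<exists>\<mu>'. consistent_family (insert e V) I (\<lambda>i. insert e (B i)) \<mu>'
          \<and> symmetric_family (insert e V) I (\<lambda>i. insert e (B i)) \<mu>'
          \<and> (\<forall>f'. dom f' = V \<longrightarrow>
               pmf (sc_round \<mu> B TE ns) f' + pmf (sc_round \<mu> B TE ns) (mirror f')
             = pmf (map_pmf (\<lambda>h. h |` V) (sc_round \<mu>' (\<lambda>i. insert e (B i)) TE ns)) f'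
               + pmf (map_pmf (\<lambda>h. h |` V) (sc_round \<mu>' (\<lambda>i. insert e (B i)) TE ns)) (mirror f'))"
proof -
  show ?thesis
    using cons'[OF assms] sym'[OF assms] final[OF assms] by blast
qed

end
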